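(* Let $x,y\in\mathrm{Cay}$. The following are equivalent: (1) $[x]\ge[y]$; (2) for each $x'\in[x]$ there exists $y'\in[y]$ such that $x'\ge y'$.
   Context: A Cayley permutation is a word of positive integers in which every integer from $1$ to its maximum occurs; $\mathrm{Cay}$ is the set of all of them. Containment $y\le x$: indices $i_1<\dots<i_k$ ($k$ the length of $y$) with $x(i_s)<x(i_t)\iff y(s)<y(t)$ and $x(i_s)=x(i_t)\iff y(s)=y(t)$. For $x$ of length $n$, $\gamma(x)$ is the permutation obtained by sorting the pairs $(x(i),i)$ increasingly by first coordinate, ties by decreasing second coordinate, and reading the second coordinates. $x\sim y$ iff $\gamma(x)=\gamma(y)$; $[x]$ is the class of $x$. For classes, $[x]\ge[y]$ iff $x'\ge y'$ for some $x'\in[x]$ and $y'\in[y]$. *)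

theory Defs
  imports Main "HOL-Library.Product_Lexorder"
begin

text \<open>Words are lists of naturals, positions are 0-based.\<close>

definition Cay :: "nat list set" where
  "Cay = {x. 0 \<notin> set x \<and> (\<forall>k. 1 \<le> k \<and> k \<le> Max (insert 0 (set x)) \<longrightarrow> k \<in> set x)}"

definition contains :: "nat list \<Rightarrow> nat list \<Rightarrow> bool" where
  "contains x y \<longleftrightarrow> (\<exists>is. length is = length y \<and> sorted_wrt (<) is \<and> (\<forall>i\<in>set is. i < length x) \<and>
     (\<forall>s<length y. \<forall>t<length y.
        (x ! (is ! s) < x ! (is ! t) \<longleftrightarrow> y ! s < y ! t) \<and>
        (x ! (is ! s) = x ! (is ! t) \<longleftrightarrow> y ! s = y ! t)))"

text \<open>gamma: sort positions i by (x(i), -i) increasingly, i.e. by value ascending,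
  ties by position descending; read off the positions.\<close>
definition gamma :: "nat list \<Rightarrow> nat list" where
  "gamma x = sort_key (\<lambda>i. (x ! i, length x - i)) [0..<length x]"

definition cls :: "nat list \<Rightarrow> nat list set" where
  "cls x = {x'. x' \<in> Cay \<and> gamma x' = gamma x}"

definition cls_ge :: "nat list set \<Rightarrow> nat list set \<Rightarrow> bool" where
  "cls_ge X Y \<longleftrightarrow> (\<exists>x'\<in>X. \<exists>y'\<in>Y. contains x' y')"

end

theory Submission
  imports Defs
begin

lemma insort_key_cong:
  assumes "\<forall>i\<in>set (x#ys). \<forall>j\<in>set (x#ys). f i \<le> f j \<longleftrightarrow> g i \<le> g j"
  shows "insort_key f x ys = insort_key g x ys"
  using assms by (induction ys) auto

lemma sort_key_cong:
  assumes "\<forall>i\<in>set xs. \<forall>j\<in>set xs. (f i :: 'b::linorder) \<le> f j \<longleftrightarrow> (g i :: 'c::linorder) \<le> g j"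
  shows "sort_key f xs = sort_key g xs"
  using assms
proof (induction xs)
  case Nil then show ?case by simp
next
  case (Cons x xs)
  then have IH: "sort_key f xs = sort_key g xs" by auto
  have "insort_key f x (sort_key g xs) = insort_key g x (sort_key g xs)"
    by (rule insort_key_cong) (use Cons.prems in auto)
  then show ?case using IH by simp
qed

lemma key_le_lt:
  assumes "i < j" "j < n"
  shows "((a::nat, (n::nat) - i) \<le> (b, n - j)) \<longleftrightarrow> a < b"
proof -
  have "n - j < n - i" using assms by linarith
  then show ?thesis by (auto simp: less_eq_prod_def)
qed

lemma key_le_gt:
  assumes "j < i" "i < n"
  shows "((a::nat, (n::nat) - i) \<le> (b, n - j)) \<longleftrightarrow> a \<le> b"
proof -
  have "n - i < n - j" using assms by linarith
  then show ?thesis by (auto simp: less_eq_prod_def)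
qed

lemma gamma_eqI:
  assumes len: "length a = length b"
    and P: "\<forall>i j. i < j \<and> j < length a \<longrightarrow> (a!i < a!j \<longleftrightarrow> b!i < b!j)"
  shows "gamma a = gamma b"
proof -
  let ?n = "length a"
  have "sort_key (\<lambda>i. (a ! i, ?n - i)) [0..<?n] = sort_key (\<lambda>i. (b ! i, ?n - i)) [0..<?n]"
  proof (rule sort_key_cong, intro ballI)
    fix i j assume i: "i \<in> set [0..<?n]" and j: "j \<in> set [0..<?n]"
    then have ij: "i < ?n" "j < ?n" by auto
    consider "i < j" | "i = j" | "j < i" by linarith
    then show "((a ! i, ?n - i) \<le> (a ! j, ?n - j)) \<longleftrightarrow> ((b ! i, ?n - i) \<le> (b ! j, ?n - j))"
    proof cases
      case 1 then show ?thesis by (simp only: key_le_lt[OF 1 ij(2)]) (use P 1 ij in blast)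
    next
      case 2 then show ?thesis by simp
    next
      case 3
      have "a!j < a!i \<longleftrightarrow> b!j < b!i" using P 3 ij by blast
      then show ?thesis unfolding key_le_gt[OF 3 ij(1)] by (metis not_le)
    qed
  qed
  then show ?thesis unfolding gamma_def using len by simp
qed

lemma gamma_eqD:
  assumes g: "gamma a = gamma b" and ij: "i < j" "j < length a"
  shows "length a = length b \<and> (a!i < a!j \<longleftrightarrow> b!i < b!j)"
proof -
  have len: "length a = length b"
    using arg_cong[OF g, of length] unfolding gamma_def by simp
  let ?n = "length a"
  define p where "p = gamma a"
  have sa: "sorted (map (\<lambda>i. (a ! i, ?n - i)) p)"
    unfolding p_def gamma_def by (rule sorted_sort_key)
  have sb: "sorted (map (\<lambda>i. (b ! i, ?n - i)) p)"
    unfolding p_def g unfolding gamma_def using len by (simp del: sorted_map)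
  have setp: "set p = {0..<?n}" unfolding p_def gamma_def by simp
  have lp: "length p = ?n" unfolding p_def gamma_def by simp
  obtain u where u: "u < ?n" "p!u = i" using setp ij lp
    by (metis atLeastLessThan_iff in_set_conv_nth le0 order.strict_trans)
  obtain v where v: "v < ?n" "p!v = j" using setp ij lp
    by (metis atLeastLessThan_iff in_set_conv_nth le0)
  have "u \<noteq> v" using u v ij by auto
  then consider "u < v" | "v < u" by linarith
  then have "a!i < a!j \<longleftrightarrow> b!i < b!j"
  proof cases
    case 1
    have "map (\<lambda>i. (a ! i, ?n - i)) p ! u \<le> map (\<lambda>i. (a ! i, ?n - i)) p ! v"
      using sorted_nth_mono[OF sa, of u v] 1 v lp by simp
    then have A: "(a!i, ?n - i) \<le> (a!j, ?n - j)" using u v 1 lp by simp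
    have "map (\<lambda>i. (b ! i, ?n - i)) p ! u \<le> map (\<lambda>i. (b ! i, ?n - i)) p ! v"
      using sorted_nth_mono[OF sb, of u v] 1 v lp by simp
    then have B: "(b!i, ?n - i) \<le> (b!j, ?n - j)" using u v 1 lp by simp
    show ?thesis using A B ij key_le_lt by metis
  next
    case 2
    have "map (\<lambda>i. (a ! i, ?n - i)) p ! v \<le> map (\<lambda>i. (a ! i, ?n - i)) p ! u"
      using sorted_nth_mono[OF sa, of v u] 2 u lp by simp
    then have A: "(a!j, ?n - j) \<le> (a!i, ?n - i)" using u v 2 lp by simp
    have "map (\<lambda>i. (b ! i, ?n - i)) p ! v \<le> map (\<lambda>i. (b ! i, ?n - i)) p ! u"
      using sorted_nth_mono[OF sb, of v u] 2 u lp by simp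
    then have B: "(b!j, ?n - j) \<le> (b!i, ?n - i)" using u v 2 lp by simp
    have "a!j \<le> a!i" "b!j \<le> b!i" using A B ij key_le_gt by metis+
    then show ?thesis by auto
  qed
  then show ?thesis using len by simp
qed

definition rk :: "nat list \<Rightarrow> nat \<Rightarrow> nat" where
  "rk w v = card {u \<in> set w. u \<le> v}"

lemma rk_mono:
  assumes "v1 \<in> set w" "v2 \<in> set w" "v1 < v2"
  shows "rk w v1 < rk w v2"
proof -
  have a: "{u \<in> set w. u \<le> v1} \<subseteq> {u \<in> set w. u \<le> v2}" using assms by auto
  have b: "v2 \<in> {u \<in> set w. u \<le> v2}" "v2 \<notin> {u \<in> set w. u \<le> v1}" using assms by auto
  have "{u \<in> set w. u \<le> v1} \<subset> {u \<in> set w. u \<le> v2}" using a b by blast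
  then show ?thesis unfolding rk_def by (intro psubset_card_mono) auto
qed

lemma rk_lt_iff:
  assumes "v1 \<in> set w" "v2 \<in> set w"
  shows "rk w v1 < rk w v2 \<longleftrightarrow> v1 < v2"
  using rk_mono[OF assms] rk_mono[OF assms(2,1)] by (cases rule: linorder_cases[of v1 v2]) auto

lemma rk_eq_iff:
  assumes "v1 \<in> set w" "v2 \<in> set w"
  shows "rk w v1 = rk w v2 \<longleftrightarrow> v1 = v2"
  using rk_mono[OF assms] rk_mono[OF assms(2,1)] by (cases rule: linorder_cases[of v1 v2]) auto

lemma rk_range:
  assumes "v \<in> set w"
  shows "rk w v \<in> {1..card (set w)}"
proof -
  have "v \<in> {u \<in> set w. u \<le> v}" using assms by auto
  then have "card {u \<in> set w. u \<le> v} > 0"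
    by (subst card_gt_0_iff) auto
  moreover have "card {u \<in> set w. u \<le> v} \<le> card (set w)" by (intro card_mono) auto
  ultimately show ?thesis unfolding rk_def by simp
qed

lemma set_std: "set (map (rk w) w) = {1..card (set w)}"
proof -
  have inj: "inj_on (rk w) (set w)" using rk_eq_iff by (meson inj_onI)
  have sub: "rk w ` set w \<subseteq> {1..card (set w)}" using rk_range by auto
  have "card (rk w ` set w) = card {1..card (set w)}" using card_image[OF inj] by simp
  then have "rk w ` set w = {1..card (set w)}" using sub by (intro card_subset_eq) auto
  then show ?thesis by simp
qed

lemma Cay_interval: "set z = {1..m} \<Longrightarrow> z \<in> Cay"
proof -
  assume s: "set z = {1..m}"
  have "Max (insert 0 {1..m}) = m"
    by (rule Max_eqI) auto
  then show ?thesis unfolding Cay_def using s by simp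
qed

theorem lemma4p14:
  assumes "x \<in> Cay" and "y \<in> Cay"
  shows "cls_ge (cls x) (cls y) \<longleftrightarrow> (\<forall>x'\<in>cls x. \<exists>y'\<in>cls y. contains x' y')"
proof
  assume "\<forall>x'\<in>cls x. \<exists>y'\<in>cls y. contains x' y'"
  moreover have "x \<in> cls x" using assms unfolding cls_def by simp
  ultimately show "cls_ge (cls x) (cls y)" unfolding cls_ge_def by blast
next
  assume "cls_ge (cls x) (cls y)"
  then obtain x' y' where x': "x' \<in> cls x" and y': "y' \<in> cls y" and c: "contains x' y'"
    unfolding cls_ge_def by blast
  then obtain ix where ix: "length ix = length y'" "sorted_wrt (<) ix" "\<forall>i\<in>set ix. i < length x'"
    and ord: "\<forall>s<length y'. \<forall>t<length y'.
        (x' ! (ix ! s) < x' ! (ix ! t) \<longleftrightarrow> y' ! s < y' ! t) \<and>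
        (x' ! (ix ! s) = x' ! (ix ! t) \<longleftrightarrow> y' ! s = y' ! t)"
    unfolding contains_def by blast
  show "\<forall>x''\<in>cls x. \<exists>y''\<in>cls y. contains x'' y''"
  proof
    fix x'' assume x'': "x'' \<in> cls x"
    have gx: "gamma x'' = gamma x'" using x' x'' unfolding cls_def by simp
    have lenx: "length x'' = length x'"
      using arg_cong[OF gx, of length] unfolding gamma_def by simp
    define w where "w = map (\<lambda>i. x'' ! i) ix"
    define y'' where "y'' = map (rk w) w"
    have lw: "length w = length y'" "length y'' = length y'" using ix unfolding w_def y''_def by auto
    have ixs: "\<And>s t. s < t \<Longrightarrow> t < length y' \<Longrightarrow> ix ! s < ix ! t"
      using ix(1,2) by (simp add: sorted_wrt_iff_nth_less)
    have ixb: "\<And>s. s < length y' \<Longrightarrow> ix ! s < length x'" using ix by auto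
    have yv: "\<And>s. s < length y' \<Longrightarrow> y'' ! s = rk w (x'' ! (ix ! s))"
      unfolding y''_def w_def using ix(1) by simp
    have inw: "\<And>s. s < length y' \<Longrightarrow> x'' ! (ix ! s) \<in> set w"
      unfolding w_def using ix(1) by (metis length_map nth_map nth_mem)
    have ord'': "\<And>s t. s < length y' \<Longrightarrow> t < length y' \<Longrightarrow>
        (x'' ! (ix ! s) < x'' ! (ix ! t) \<longleftrightarrow> y'' ! s < y'' ! t) \<and>
        (x'' ! (ix ! s) = x'' ! (ix ! t) \<longleftrightarrow> y'' ! s = y'' ! t)"
    proof -
      fix s t assume a: "s < length y'" "t < length y'"
      show "(x'' ! (ix ! s) < x'' ! (ix ! t) \<longleftrightarrow> y'' ! s < y'' ! t) \<and>
        (x'' ! (ix ! s) = x'' ! (ix ! t) \<longleftrightarrow> y'' ! s = y'' ! t)"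
        unfolding yv[OF a(1)] yv[OF a(2)] using rk_lt_iff[OF inw[OF a(1)] inw[OF a(2)]]
          rk_eq_iff[OF inw[OF a(1)] inw[OF a(2)]] by simp
    qed
    have cont: "contains x'' y''"
      unfolding contains_def using ix lw ord'' lenx by (intro exI[of _ ix]) auto
    have "y'' \<in> Cay" unfolding y''_def by (rule Cay_interval[OF set_std])
    moreover have "gamma y'' = gamma y'"
    proof (rule gamma_eqI)
      show "length y'' = length y'" by (rule lw(2))
      show "\<forall>s t. s < t \<and> t < length y'' \<longrightarrow> (y'' ! s < y'' ! t) = (y' ! s < y' ! t)"
      proof (intro allI impI)
        fix s t assume st: "s < t \<and> t < length y''"
        then have st': "s < length y'" "t < length y'" using lw by auto
        have "ix ! s < ix ! t" "ix ! t < length x'" using ixs ixb st lw by auto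
        then have "x'' ! (ix ! s) < x'' ! (ix ! t) \<longleftrightarrow> x' ! (ix ! s) < x' ! (ix ! t)"
          using gamma_eqD[OF gx] lenx by auto
        then show "(y'' ! s < y'' ! t) = (y' ! s < y' ! t)"
          using ord''[OF st'] ord st' by simp
      qed
    qed
    ultimately have "y'' \<in> cls y" using y' unfolding cls_def by simp
    then show "\<exists>y''\<in>cls y. contains x'' y''" using cont by blast
  qed
qed

end
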